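(* Let $\gamma:(0,\infty)\times(0,\infty)\to[0,\infty)$ be a function such that $v\mapsto\gamma(u,v)$ is non-decreasing for every fixed $u>0$. Then for every $N\ge 2$, all pairwise distinct points $x_1,\dots,x_N\in\mathbb{R}^3\setminus\{0\}$ and every $r>0$, $$\sum_{\substack{j,k=1\\ j\ne k}}^N \frac{\gamma(|x_j-x_k|,\,r|x_j|)}{|x_j|}\;x_j\cdot(x_j-x_k)\ \ge\ 0.$$ *)

theory Defs
  imports "HOL-Analysis.Analysis"
begin

end

theory Submission
  imports Defs
begin

lemma key_real:
  fixes a b p ga gb :: real
  assumes a: "a > 0" and b: "b > 0" and p: "p \<le> a * b" and gb: "0 \<le> gb"
    and g: "gb \<le> ga" and ab: "b \<le> a"
  shows "ga / a * (a\<^sup>2 - p) + gb / b * (b\<^sup>2 - p) \<ge> 0"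
proof -
  have h1: "a\<^sup>2 - p \<ge> 0"
  proof -
    have "a * b \<le> a * a" using ab a by (simp add: mult_left_mono)
    thus ?thesis using p by (simp add: power2_eq_square)
  qed
  have e: "ga / a * (a\<^sup>2 - p) + gb / b * (b\<^sup>2 - p)
      = ((ga - gb) * b * (a\<^sup>2 - p) + gb * ((a + b) * (a * b - p))) / (a * b)"
    using a b by (simp add: field_simps power2_eq_square)
  have "(ga - gb) * b * (a\<^sup>2 - p) \<ge> 0" using g b h1 by simp
  moreover have "gb * ((a + b) * (a * b - p)) \<ge> 0" using gb a b p by simp
  ultimately show ?thesis unfolding e using a b by simp
qed

lemma pair_nonneg:
  fixes \<gamma> :: "real \<Rightarrow> real \<Rightarrow> real" and y z :: "real ^ 3" and r :: real
  assumes nonneg: "\<And>u v. u > 0 \<Longrightarrow> v > 0 \<Longrightarrow> \<gamma> u v \<ge> 0"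
    and mono: "\<And>u v w. u > 0 \<Longrightarrow> 0 < v \<Longrightarrow> v \<le> w \<Longrightarrow> \<gamma> u v \<le> \<gamma> u w"
    and yz: "y \<noteq> z" and y: "y \<noteq> 0" and z: "z \<noteq> 0" and r: "r > 0"
    and le: "norm z \<le> norm y"
  shows "\<gamma> (norm (y - z)) (r * norm y) / norm y * (y \<bullet> (y - z))
       + \<gamma> (norm (z - y)) (r * norm z) / norm z * (z \<bullet> (z - y)) \<ge> 0"
proof -
  have u: "norm (y - z) > 0" using yz by simp
  have nzy: "norm (z - y) = norm (y - z)" by (rule norm_minus_commute)
  have e1: "y \<bullet> (y - z) = (norm y)\<^sup>2 - y \<bullet> z"
    by (simp add: inner_diff_right power2_norm_eq_inner)
  have e2: "z \<bullet> (z - y) = (norm z)\<^sup>2 - y \<bullet> z"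
    by (simp add: inner_diff_right power2_norm_eq_inner inner_commute)
  have p: "y \<bullet> z \<le> norm y * norm z" by (rule norm_cauchy_schwarz)
  have gb: "0 \<le> \<gamma> (norm (y - z)) (r * norm z)" using nonneg u r z by simp
  have g: "\<gamma> (norm (y - z)) (r * norm z) \<le> \<gamma> (norm (y - z)) (r * norm y)"
    using mono[OF u] r z le by (simp add: mult_left_mono)
  show ?thesis unfolding e1 e2 nzy
    using key_real[OF _ _ p gb g le] y z by simp
qed

theorem lemma5p4:
  fixes \<gamma> :: "real \<Rightarrow> real \<Rightarrow> real"
    and x :: "nat \<Rightarrow> real ^ 3"
    and N :: nat and r :: real
  assumes nonneg: "\<And>u v. u > 0 \<Longrightarrow> v > 0 \<Longrightarrow> \<gamma> u v \<ge> 0"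
    and mono: "\<And>u v w. u > 0 \<Longrightarrow> 0 < v \<Longrightarrow> v \<le> w \<Longrightarrow> \<gamma> u v \<le> \<gamma> u w"
    and N: "N \<ge> 2"
    and distinct: "inj_on x {1..N}"
    and nonzero: "\<And>j. j \<in> {1..N} \<Longrightarrow> x j \<noteq> 0"
    and r: "r > 0"
  shows "(\<Sum>j\<in>{1..N}. \<Sum>k\<in>{1..N} - {j}.
            \<gamma> (norm (x j - x k)) (r * norm (x j)) / norm (x j) * (x j \<bullet> (x j - x k))) \<ge> 0"
proof -
  define T where "T j k = \<gamma> (norm (x j - x k)) (r * norm (x j)) / norm (x j) * (x j \<bullet> (x j - x k))" for j k
  have TJ: "T j j = 0" for j by (simp add: T_def)
  have inner: "(\<Sum>k\<in>{1..N} - {j}. T j k) = (\<Sum>k\<in>{1..N}. T j k)" for j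
  proof (cases "j \<in> {1..N}")
    case True
    then show ?thesis using sum.remove[of "{1..N}" j "T j"] TJ by simp
  next
    case False
    then show ?thesis by simp
  qed
  let ?S = "\<Sum>j\<in>{1..N}. \<Sum>k\<in>{1..N}. T j k"
  have sw: "?S = (\<Sum>j\<in>{1..N}. \<Sum>k\<in>{1..N}. T k j)" by (rule sum.swap)
  have pw: "T j k + T k j \<ge> 0" if j: "j \<in> {1..N}" and k: "k \<in> {1..N}" for j k
  proof (cases "j = k")
    case True then show ?thesis by (simp add: TJ)
  next
    case False
    have ne: "x j \<noteq> x k" using distinct j k False by (meson inj_onD)
    show ?thesis
    proof (cases "norm (x k) \<le> norm (x j)")
      case True
      then show ?thesis unfolding T_def
        using pair_nonneg[of \<gamma> "x j" "x k" r, OF nonneg mono ne nonzero[OF j] nonzero[OF k] r] by auto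
    next
      case c: False
      then show ?thesis unfolding T_def
        using pair_nonneg[of \<gamma> "x k" "x j" r, OF nonneg mono ne[symmetric] nonzero[OF k] nonzero[OF j] r] by (auto simp: add.commute)
    qed
  qed
  have "2 * ?S = (\<Sum>j\<in>{1..N}. \<Sum>k\<in>{1..N}. T j k + T k j)"
    using sw by (simp add: sum.distrib)
  also have "\<dots> \<ge> 0" using pw by (intro sum_nonneg) auto
  finally have "?S \<ge> 0" by simp
  then show ?thesis using inner unfolding T_def by simp
qed

end
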